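(* Consider an instance of Matroidal Demand Matching with optimum value $\mathrm{OPT}$. For each $\epsilon>0$ there is a feasible solution $M\subseteq E$ with the following properties: (1) $p(M)\ge(1-2\epsilon)\,\mathrm{OPT}$; (2) for each $v\in V$ there is some $M_v\subseteq M$ with $|M_v|\le 1/\epsilon^2$ such that $d_{v,e}\le\epsilon\cdot\big(b_v-\sum_{f\in\delta(v)\cap M_v}d_{v,f}\big)$ for all $e\in\delta(v)\cap(M\setminus M_v)$.
   Context: Matroidal Demand Matching: a graph $G=(V,E)$ (parallel edges allowed) with capacities $b_v\ge0$, for each edge $e=uv$ demands $d_{u,e},d_{v,e}\ge0$ and a profit $p_e\ge0$, and a matroid $\mathcal M=(E,\mathcal I)$; a set $F\subseteq E$ is feasible if $F\in\mathcal I$ and $\sum_{e\in\delta(v)\cap F}d_{v,e}\le b_v$ for all $v\in V$; the goal is to maximize $p(F)=\sum_{e\in F}p_e$ over feasible $F$. $\delta(v)$ is the set of edges incident to $v$. *)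

theory Defs
  imports Complex_Main
begin

definition matroid :: "'e set \<Rightarrow> ('e set \<Rightarrow> bool) \<Rightarrow> bool" where
  "matroid E indep \<longleftrightarrow>
     finite E \<and>
     (\<forall>X. indep X \<longrightarrow> X \<subseteq> E) \<and>
     indep {} \<and>
     (\<forall>X Y. indep X \<and> Y \<subseteq> X \<longrightarrow> indep Y) \<and>
     (\<forall>X Y. indep X \<and> indep Y \<and> card X < card Y \<longrightarrow>
        (\<exists>y\<in>Y - X. indep (insert y X)))"

definition delta :: "'e set \<Rightarrow> ('e \<Rightarrow> 'v) \<Rightarrow> ('e \<Rightarrow> 'v) \<Rightarrow> 'v \<Rightarrow> 'e set" where
  "delta E ep1 ep2 v = {e \<in> E. ep1 e = v \<or> ep2 e = v}"

definition mdm_feasible ::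
  "'v set \<Rightarrow> 'e set \<Rightarrow> ('e \<Rightarrow> 'v) \<Rightarrow> ('e \<Rightarrow> 'v) \<Rightarrow> ('v \<Rightarrow> real) \<Rightarrow>
   ('v \<Rightarrow> 'e \<Rightarrow> real) \<Rightarrow> ('e set \<Rightarrow> bool) \<Rightarrow> 'e set \<Rightarrow> bool" where
  "mdm_feasible V E ep1 ep2 b d indep F \<longleftrightarrow>
     F \<subseteq> E \<and> indep F \<and>
     (\<forall>v\<in>V. (\<Sum>e\<in>delta E ep1 ep2 v \<inter> F. d v e) \<le> b v)"

definition mdm_opt ::
  "'v set \<Rightarrow> 'e set \<Rightarrow> ('e \<Rightarrow> 'v) \<Rightarrow> ('e \<Rightarrow> 'v) \<Rightarrow> ('v \<Rightarrow> real) \<Rightarrow>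
   ('v \<Rightarrow> 'e \<Rightarrow> real) \<Rightarrow> ('e set \<Rightarrow> bool) \<Rightarrow> ('e \<Rightarrow> real) \<Rightarrow> real" where
  "mdm_opt V E ep1 ep2 b d indep p =
     Max {sum p F | F. mdm_feasible V E ep1 ep2 b d indep F}"

end

theory Submission
  imports Defs
begin

lemma sum_blocks:
  "(\<Sum>j<n. sum_list (map p (take k (drop (j*k) xs)))) = sum_list (map p (take (n*k) xs))"
proof (induction n)
  case 0 then show ?case by simp
next
  case (Suc n)
  have "take (Suc n * k) xs = take (n*k) xs @ take k (drop (n*k) xs)"
    by (metis add.commute mult_Suc take_add)
  then show ?case using Suc by simp
qed

lemma avg_exists:
  fixes a :: "nat \<Rightarrow> real"
  assumes "c \<ge> 1"
  shows "\<exists>j<c. real c * a j \<le> (\<Sum>j<c. a j)"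
proof (rule ccontr)
  assume "\<not> ?thesis"
  then have h: "\<And>j. j \<in> {..<c} \<Longrightarrow> (\<Sum>j<c. a j) < real c * a j" by auto
  have "(\<Sum>j<c. (\<Sum>j<c. a j)) < (\<Sum>j<c. real c * a j)"
  proof (rule sum_strict_mono)
    show "{..<c} \<noteq> {}" using assms by (simp add: lessThan_empty_iff)
  qed (auto intro: h)
  then show False by (simp add: sum_distrib_left)
qed

lemma vertex_list:
  fixes d p :: "'e \<Rightarrow> real"
  assumes dist: "distinct xs" and srt: "sorted (map (\<lambda>e. - d e) xs)"
    and dn: "\<forall>e\<in>set xs. d e \<ge> 0" and pn: "\<forall>e\<in>set xs. p e \<ge> 0" and c1: "c \<ge> 1"
  shows "\<exists>Mv R. Mv \<subseteq> set xs \<and> R \<subseteq> set xs \<and> card Mv \<le> (c-1)*(c-1) \<and>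
     real c * sum p R \<le> sum p (set xs) \<and>
     (\<forall>e \<in> set xs - Mv - R. real c * d e \<le> sum d (set xs - Mv))"
proof -
  define k where "k = c - 1"
  define B where "B j = take k (drop (j*k) xs)" for j
  obtain j where j: "j < c" and jav: "real c * sum_list (map p (B j)) \<le> (\<Sum>j<c. sum_list (map p (B j)))"
    using avg_exists[OF c1, of "\<lambda>j. sum_list (map p (B j))"] by blast
  have "(\<Sum>j<c. sum_list (map p (B j))) = sum_list (map p (take (c*k) xs))"
    unfolding B_def by (rule sum_blocks)
  also have "\<dots> \<le> sum_list (map p xs)"
  proof -
    have "sum_list (map p xs) = sum_list (map p (take (c*k) xs @ drop (c*k) xs))" by simp
    also have "\<dots> = sum_list (map p (take (c*k) xs)) + sum_list (map p (drop (c*k) xs))"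
      by (simp only: map_append sum_list_append)
    finally have "sum_list (map p xs) = sum_list (map p (take (c*k) xs)) + sum_list (map p (drop (c*k) xs))" .
    moreover have "sum_list (map p (drop (c*k) xs)) \<ge> 0"
      using pn by (intro sum_list_nonneg) (auto dest: in_set_dropD)
    ultimately show ?thesis by simp
  qed
  also have "\<dots> = sum p (set xs)" using dist by (simp add: sum_list_distinct_conv_sum_set)
  finally have pb: "real c * sum p (set (B j)) \<le> sum p (set xs)"
    using jav dist unfolding B_def by (simp add: sum_list_distinct_conv_sum_set)
  define Mv where "Mv = set (take (j*k) xs)"
  have cardM: "card Mv \<le> (c-1)*(c-1)"
  proof -
    have "card Mv \<le> length (take (j*k) xs)" unfolding Mv_def by (rule card_length)
    also have "\<dots> \<le> j*k" by simp
    finally have "card Mv \<le> j*k" .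
    also have "\<dots> \<le> (c-1)*(c-1)" using j unfolding k_def by (intro mult_le_mono1) simp
    finally show ?thesis .
  qed
  have key: "real c * d e \<le> sum d (set xs - Mv)" if e: "e \<in> set xs - Mv - set (B j)" for e
  proof -
    from e obtain i where i: "i < length xs" "xs ! i = e" by (auto simp: in_set_conv_nth)
    have ige: "i \<ge> j*k + k"
    proof (rule ccontr)
      assume "\<not> ?thesis"
      show False
      proof (cases "i < j*k")
        case True
        then have "e \<in> Mv" unfolding Mv_def using i by (auto simp: in_set_conv_nth)
        then show False using e by auto
      next
        case False
        then have "B j ! (i - j*k) = e" "i - j*k < length (B j)"
          using i \<open>\<not> i \<ge> j*k + k\<close> unfolding B_def by auto
        then have "e \<in> set (B j)" by (metis nth_mem)
        then show False using e by auto
      qed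
    qed
    have lenB: "length (B j) = k" using i ige unfolding B_def by simp
    have distB: "distinct (B j)" using dist unfolding B_def by simp
    have cardB: "card (set (B j)) = k" using lenB distB by (simp add: distinct_card)
    have ge: "d e \<le> d f" if f: "f \<in> set (B j)" for f
    proof -
      from f obtain t where t: "t < k" "B j ! t = f" using lenB by (auto simp: in_set_conv_nth)
      have ft: "f = xs ! (j*k + t)" using t lenB unfolding B_def by auto
      have "- d f \<le> - d e"
        using sorted_nth_mono[OF srt, of "j*k+t" i] t i ige by (simp add: ft)
      then show ?thesis by simp
    qed
    have "real k * d e \<le> sum d (set (B j))"
      using sum_bounded_below[of "set (B j)" "d e" d] ge cardB by simp
    moreover have "e \<notin> set (B j)" using e by auto
    moreover have sub: "insert e (set (B j)) \<subseteq> set xs - Mv"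
    proof -
      have "set (B j) \<subseteq> set (drop (j*k) xs)" unfolding B_def by (rule set_take_subset)
      moreover have "set (take (j*k) xs) \<inter> set (drop (j*k) xs) = {}"
        using set_take_disj_set_drop_if_distinct[OF dist] by simp
      moreover have "set (drop (j*k) xs) \<subseteq> set xs" by (rule set_drop_subset)
      ultimately show ?thesis using e unfolding Mv_def by auto
    qed
    moreover have "sum d (insert e (set (B j))) \<le> sum d (set xs - Mv)"
      using sub dn by (intro sum_mono2) auto
    ultimately show ?thesis using c1 unfolding k_def by (simp add: algebra_simps of_nat_diff)
  qed
  show ?thesis
    apply (rule exI[of _ Mv], rule exI[of _ "set (B j)"])
    using cardM pb key unfolding Mv_def B_def
    by (auto dest: in_set_takeD in_set_dropD)
qed

lemma vertex_set:
  fixes d p :: "'e \<Rightarrow> real"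
  assumes "finite S" "\<forall>e\<in>S. d e \<ge> 0" "\<forall>e\<in>S. p e \<ge> 0" "c \<ge> 1"
  shows "\<exists>Mv R. Mv \<subseteq> S \<and> R \<subseteq> S \<and> card Mv \<le> (c-1)*(c-1) \<and>
     real c * sum p R \<le> sum p S \<and>
     (\<forall>e \<in> S - Mv - R. real c * d e \<le> sum d (S - Mv))"
proof -
  obtain ys where ys: "set ys = S" "distinct ys" using finite_distinct_list[OF assms(1)] by blast
  define xs where "xs = sort_key (\<lambda>e. - d e) ys"
  have "distinct xs" "set xs = S" "sorted (map (\<lambda>e. - d e) xs)" using ys unfolding xs_def by auto
  then show ?thesis using vertex_list[of xs d p c] assms by simp
qed

lemma sum_UN_le_nn:
  fixes f :: "'a \<Rightarrow> real"
  assumes "finite I" "\<forall>i\<in>I. finite (R i)" "\<forall>i\<in>I. \<forall>x\<in>R i. f x \<ge> 0"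
  shows "sum f (\<Union>i\<in>I. R i) \<le> (\<Sum>i\<in>I. sum f (R i))"
  using assms
proof (induction I rule: finite_induct)
  case empty then show ?case by simp
next
  case (insert x F)
  have "sum f (R x \<union> (\<Union>i\<in>F. R i)) = sum f (R x) + sum f (\<Union>i\<in>F. R i) - sum f (R x \<inter> (\<Union>i\<in>F. R i))"
    using insert by (intro sum_Un) auto
  moreover have "sum f (R x \<inter> (\<Union>i\<in>F. R i)) \<ge> 0" using insert by (intro sum_nonneg) auto
  ultimately show ?case using insert by simp
qed

theorem lemma9:
  fixes V :: "'v set" and E :: "'e set" and ep1 ep2 :: "'e \<Rightarrow> 'v"
    and b :: "'v \<Rightarrow> real" and d :: "'v \<Rightarrow> 'e \<Rightarrow> real" and p :: "'e \<Rightarrow> real"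
    and indep :: "'e set \<Rightarrow> bool" and \<epsilon> :: real
  assumes "finite V" and "finite E"
    and "\<And>e. e \<in> E \<Longrightarrow> ep1 e \<in> V \<and> ep2 e \<in> V \<and> ep1 e \<noteq> ep2 e"
    and "\<And>v. v \<in> V \<Longrightarrow> b v \<ge> 0"
    and "\<And>v e. v \<in> V \<Longrightarrow> e \<in> E \<Longrightarrow> d v e \<ge> 0"
    and "\<And>e. e \<in> E \<Longrightarrow> p e \<ge> 0"
    and "matroid E indep"
    and "\<epsilon> > 0"
  shows "\<exists>M. mdm_feasible V E ep1 ep2 b d indep M \<and>
           sum p M \<ge> (1 - 2 * \<epsilon>) * mdm_opt V E ep1 ep2 b d indep p \<and>
           (\<forall>v\<in>V. \<exists>Mv. Mv \<subseteq> M \<and> real (card Mv) \<le> 1 / \<epsilon>\<^sup>2 \<and>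
              (\<forall>e\<in>delta E ep1 ep2 v \<inter> (M - Mv).
                 d v e \<le> \<epsilon> * (b v - (\<Sum>f\<in>delta E ep1 ep2 v \<inter> Mv. d v f))))"
proof -
  note fV = assms(1) and fE = assms(2) and ends = assms(3) and bn = assms(4)
    and dn = assms(5) and pn = assms(6) and mat = assms(7) and epos = assms(8)
  let ?feas = "mdm_feasible V E ep1 ep2 b d indep"
  let ?opt = "mdm_opt V E ep1 ep2 b d indep p"
  let ?dl = "delta E ep1 ep2"
  have dsub: "?dl v \<subseteq> E" for v unfolding delta_def by auto
  have indep_empty: "indep {}" and indep_sub: "\<And>X Y. indep X \<Longrightarrow> Y \<subseteq> X \<Longrightarrow> indep Y"
    using mat unfolding matroid_def by blast+
  have feas_empty: "?feas {}" unfolding mdm_feasible_def using indep_empty bn by simp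
  define Sset where "Sset = {sum p F | F. ?feas F}"
  have fin: "finite Sset"
  proof -
    have "Sset \<subseteq> sum p ` Pow E" unfolding Sset_def mdm_feasible_def by auto
    then show ?thesis using fE finite_subset by blast
  qed
  have ne: "Sset \<noteq> {}" using feas_empty unfolding Sset_def by blast
  have optdef: "?opt = Max Sset" unfolding mdm_opt_def Sset_def ..
  obtain Fs where Fs: "?feas Fs" "sum p Fs = ?opt"
    using Max_in[OF fin ne] unfolding optdef Sset_def by auto
  have FsE: "Fs \<subseteq> E" using Fs(1) unfolding mdm_feasible_def by blast
  have finFs: "finite Fs" using FsE fE finite_subset by blast
  have Fsb: "\<And>v. v \<in> V \<Longrightarrow> sum (d v) (?dl v \<inter> Fs) \<le> b v"
    using Fs(1) unfolding mdm_feasible_def by blast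
  have "sum p Fs \<ge> 0" using pn FsE by (intro sum_nonneg) auto
  then have optnn: "?opt \<ge> 0" using Fs(2) by simp
  show ?thesis
  proof (cases "\<epsilon> \<ge> 1/2")
    case True
    have "(1 - 2 * \<epsilon>) * ?opt \<le> 0" using True optnn by (simp add: mult_nonpos_nonneg)
    then show ?thesis using feas_empty by (intro exI[of _ "{}"]) auto
  next
    case False
    define c where "c = nat \<lceil>1/\<epsilon>\<rceil>"
    have "1/\<epsilon> > 0" using epos by simp
    then have cnn: "\<lceil>1/\<epsilon>\<rceil> \<ge> 0" unfolding zero_le_ceiling by linarith
    have creal: "real c = real_of_int \<lceil>1/\<epsilon>\<rceil>" unfolding c_def using cnn by simp
    have cge: "real c \<ge> 1/\<epsilon>" unfolding creal by simp
    have clt: "real c < 1/\<epsilon> + 1" unfolding creal using ceiling_correct[of "1/\<epsilon>"] by linarith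
    have "1/\<epsilon> > 0" using epos by simp
    then have "real c > 0" using cge by linarith
    then have c1: "c \<ge> 1" by simp
    have ec: "\<epsilon> * real c \<ge> 1" using cge epos by (simp add: field_simps)
    define S where "S v = ?dl v \<inter> Fs" for v
    define Q where "Q v Mv R \<longleftrightarrow> Mv \<subseteq> S v \<and> R \<subseteq> S v \<and> card Mv \<le> (c-1)*(c-1) \<and>
       real c * sum p R \<le> sum p (S v) \<and>
       (\<forall>e \<in> S v - Mv - R. real c * d v e \<le> sum (d v) (S v - Mv))" for v Mv R
    have exQ: "\<exists>Mv R. Q v Mv R" if v: "v \<in> V" for v
      unfolding Q_def
      apply (rule vertex_set)
      using finFs FsE dn[OF v] pn c1 unfolding S_def by auto
    define MV where "MV v = (SOME Mv. \<exists>R. Q v Mv R)" for v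
    define RR where "RR v = (SOME R. Q v (MV v) R)" for v
    have MR: "MV v \<subseteq> S v \<and> RR v \<subseteq> S v \<and> card (MV v) \<le> (c-1)*(c-1) \<and>
       real c * sum p (RR v) \<le> sum p (S v) \<and>
       (\<forall>e \<in> S v - MV v - RR v. real c * d v e \<le> sum (d v) (S v - MV v))" if v: "v \<in> V" for v
    proof -
      have "\<exists>R. Q v (MV v) R" unfolding MV_def using exQ[OF v] by (rule someI_ex)
      then have "Q v (MV v) (RR v)" unfolding RR_def by (rule someI_ex)
      then show ?thesis unfolding Q_def .
    qed
    define U where "U = (\<Union>v\<in>V. RR v)"
    define M where "M = Fs - U"
    have SFs: "S v \<subseteq> Fs" for v unfolding S_def by auto
    have UFs: "U \<subseteq> Fs" unfolding U_def using MR SFs by blast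
    have MFs: "M \<subseteq> Fs" unfolding M_def by auto
    have feasM: "?feas M"
    proof -
      have "indep M" using Fs(1) MFs indep_sub unfolding mdm_feasible_def by blast
      moreover have "sum (d v) (?dl v \<inter> M) \<le> b v" if v: "v \<in> V" for v
      proof -
        have "sum (d v) (?dl v \<inter> M) \<le> sum (d v) (?dl v \<inter> Fs)"
          using MFs finFs FsE dn[OF v] by (intro sum_mono2) auto
        then show ?thesis using Fsb[OF v] by linarith
      qed
      ultimately show ?thesis using MFs FsE unfolding mdm_feasible_def by auto
    qed
    have fS: "finite (S v)" for v using finFs SFs finite_subset by blast
    have pU: "sum p U \<le> (\<Sum>v\<in>V. sum p (RR v))"
      unfolding U_def
    proof (rule sum_UN_le_nn[OF fV])
      have RS: "RR v \<subseteq> Fs" if "v \<in> V" for v using MR[OF that] SFs by blast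
      show "\<forall>i\<in>V. finite (RR i)" using RS finFs finite_subset by blast
      show "\<forall>i\<in>V. \<forall>x\<in>RR i. 0 \<le> p x" using RS FsE pn by blast
    qed
    have pR: "sum p (RR v) \<le> \<epsilon> * sum p (S v)" if v: "v \<in> V" for v
    proof -
      have "sum p (S v) \<ge> 0" using SFs FsE pn by (intro sum_nonneg) auto
      then have "1 * sum p (S v) \<le> (\<epsilon> * real c) * sum p (S v)" using ec by (rule mult_right_mono[rotated])
      then have "sum p (S v) \<le> \<epsilon> * real c * sum p (S v)" by simp
      moreover have "real c * sum p (RR v) \<le> sum p (S v)" using MR[OF v] by blast
      ultimately have "real c * sum p (RR v) \<le> real c * (\<epsilon> * sum p (S v))" by (simp add: algebra_simps)
      moreover have "real c > 0" using c1 by simp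
      ultimately show ?thesis by simp
    qed
    have twice: "(\<Sum>v\<in>V. sum p (S v)) = 2 * sum p Fs"
    proof -
      have "(\<Sum>v\<in>V. sum p (S v)) = (\<Sum>v\<in>V. \<Sum>e\<in>Fs. if ep1 e = v \<or> ep2 e = v then p e else 0)"
      proof (rule sum.cong[OF refl])
        fix v assume "v \<in> V"
        have "S v = Fs \<inter> {e. ep1 e = v \<or> ep2 e = v}" unfolding S_def delta_def using FsE by auto
        then show "sum p (S v) = (\<Sum>e\<in>Fs. if ep1 e = v \<or> ep2 e = v then p e else 0)"
          using finFs by (simp add: sum.inter_restrict)
      qed
      also have "\<dots> = (\<Sum>e\<in>Fs. \<Sum>v\<in>V. if ep1 e = v \<or> ep2 e = v then p e else 0)"
        by (rule sum.swap)
      also have "\<dots> = (\<Sum>e\<in>Fs. 2 * p e)"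
      proof (rule sum.cong[OF refl])
        fix e assume e: "e \<in> Fs"
        have eq: "{v \<in> V. ep1 e = v \<or> ep2 e = v} = {ep1 e, ep2 e}" using ends[of e] e FsE by auto
        have "(\<Sum>v\<in>V. if ep1 e = v \<or> ep2 e = v then p e else 0) = (\<Sum>v\<in>{v \<in> V. ep1 e = v \<or> ep2 e = v}. p e)"
          by (rule sum.inter_filter[OF fV, symmetric])
        also have "\<dots> = 2 * p e" unfolding eq using ends[of e] e FsE by auto
        finally show "(\<Sum>v\<in>V. if ep1 e = v \<or> ep2 e = v then p e else 0) = 2 * p e" .
      qed
      finally show ?thesis by (simp add: sum_distrib_left)
    qed
    have profit: "sum p M \<ge> (1 - 2 * \<epsilon>) * ?opt"
    proof -
      have split: "sum p Fs = sum p M + sum p U" unfolding M_def using UFs finFs by (simp add: sum.subset_diff)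
      have "sum p U \<le> (\<Sum>v\<in>V. \<epsilon> * sum p (S v))" using pU pR sum_mono[of V "\<lambda>v. sum p (RR v)"] by (meson order.trans)
      also have "\<dots> = \<epsilon> * (2 * sum p Fs)" by (simp add: sum_distrib_left[symmetric] twice)
      finally show ?thesis using split Fs(2) by (simp add: algebra_simps)
    qed
    have cond: "\<exists>Mv. Mv \<subseteq> M \<and> real (card Mv) \<le> 1 / \<epsilon>\<^sup>2 \<and>
              (\<forall>e\<in>?dl v \<inter> (M - Mv). d v e \<le> \<epsilon> * (b v - (\<Sum>f\<in>?dl v \<inter> Mv. d v f)))"
      if v: "v \<in> V" for v
    proof (intro exI[of _ "MV v \<inter> M"] conjI ballI)
      show "MV v \<inter> M \<subseteq> M" by auto
      have "card (MV v \<inter> M) \<le> card (MV v)" using fS MR[OF v] by (intro card_mono) (auto intro: finite_subset)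
      also have "\<dots> \<le> (c-1)*(c-1)" using MR[OF v] by blast
      finally have "card (MV v \<inter> M) \<le> (c-1)*(c-1)" .
      then have "real (card (MV v \<inter> M)) \<le> real ((c-1)*(c-1))" by (simp only: of_nat_le_iff)
      also have "real ((c-1)*(c-1)) = (real c - 1) * (real c - 1)" using c1 by (simp add: of_nat_diff)
      finally have "real (card (MV v \<inter> M)) \<le> (real c - 1) * (real c - 1)" .
      also have "\<dots> \<le> (1/\<epsilon>) * (1/\<epsilon>)" using clt c1 epos by (intro mult_mono) auto
      also have "\<dots> = 1/\<epsilon>\<^sup>2" by (simp add: power2_eq_square)
      finally show "real (card (MV v \<inter> M)) \<le> 1/\<epsilon>\<^sup>2" .
    next
      fix e assume e: "e \<in> ?dl v \<inter> (M - MV v \<inter> M)"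
      have eS: "e \<in> S v - MV v - RR v" using e v unfolding S_def M_def U_def by auto
      have eE: "e \<in> E" using e dsub by auto
      have ce: "real c * d v e \<le> sum (d v) (S v - MV v)" using MR[OF v] eS by blast
      have MVS: "MV v \<subseteq> S v" using MR[OF v] by blast
      have "sum (d v) (S v) = sum (d v) (S v - MV v) + sum (d v) (MV v)"
        using MVS fS by (simp add: sum.subset_diff)
      moreover have "sum (d v) (?dl v \<inter> (MV v \<inter> M)) \<le> sum (d v) (MV v)"
      proof (rule sum_mono2)
        show "finite (MV v)" using MVS fS finite_subset by blast
        show "?dl v \<inter> (MV v \<inter> M) \<subseteq> MV v" by blast
        have "MV v \<subseteq> E" using MVS SFs FsE by blast
        then show "\<And>b. b \<in> MV v - ?dl v \<inter> (MV v \<inter> M) \<Longrightarrow> 0 \<le> d v b" using dn[OF v] by blast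
      qed
      moreover have "sum (d v) (S v) \<le> b v" using Fsb[OF v] unfolding S_def .
      ultimately have X: "real c * d v e \<le> b v - sum (d v) (?dl v \<inter> (MV v \<inter> M))" using ce by linarith
      have de: "d v e \<ge> 0" using dn[OF v eE] .
      have "d v e \<le> (\<epsilon> * real c) * d v e" using ec de by (simp add: mult_le_cancel_right1)
      also have "\<dots> = \<epsilon> * (real c * d v e)" by simp
      also have "\<dots> \<le> \<epsilon> * (b v - sum (d v) (?dl v \<inter> (MV v \<inter> M)))" using X epos by simp
      finally show "d v e \<le> \<epsilon> * (b v - (\<Sum>f\<in>?dl v \<inter> (MV v \<inter> M). d v f))" .
    qed
    show ?thesis using feasM profit cond by blast
  qed
qed

end
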